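(* Suppose the distribution $\mathcal{D}$ on $\mathbb{R}^d$ has $(r,\alpha,\gamma)$ margins, and $\mathcal{D}'$ is a distribution on $\mathbb{R}^d$ with $\mathrm{TV}(\mathcal{D},\mathcal{D}')\le\theta$. If $\theta\le\frac12\inf_{\beta\ne0}\Pr_{e\sim\mathcal{D}}[\beta\cdot e>r\|\beta\|+\alpha\|\beta\|]$, then $\mathcal{D}'$ has $(r,\alpha,\gamma/4)$ margins.
   Context: $\mathrm{TV}$ denotes total variation distance. A distribution $\mathcal{D}$ on $\mathbb{R}^d$ has $(r,\alpha,\gamma)$ margins if for all $\beta\ne0$ and all $b\le r\|\beta\|$, with $e\sim\mathcal{D}$, $\Pr[\beta\cdot e>b+\alpha\|\beta\|\mid\beta\cdot e\ge b]\ge\gamma$. *)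

theory Defs
  imports "HOL-Probability.Probability"
begin

definition tv_dist :: "'a measure \<Rightarrow> 'a measure \<Rightarrow> real" where
  "tv_dist M N = (SUP A \<in> sets M. \<bar>measure M A - measure N A\<bar>)"

definition cond_prob :: "'a measure \<Rightarrow> 'a set \<Rightarrow> 'a set \<Rightarrow> real" where
  "cond_prob M A B = measure M (A \<inter> B) / measure M B"

text \<open>(r, alpha, gamma) margins. The conditional probability is only required
  when the conditioning event has positive probability.\<close>
definition has_margins :: "'a::euclidean_space measure \<Rightarrow> real \<Rightarrow> real \<Rightarrow> real \<Rightarrow> bool" where
  "has_margins D r \<alpha> \<gamma> \<longleftrightarrow>
     (\<forall>\<beta> b. \<beta> \<noteq> 0 \<and> b \<le> r * norm \<beta> \<and> measure D {e \<in> space D. \<beta> \<bullet> e \<ge> b} > 0 \<longrightarrow>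
        cond_prob D {e \<in> space D. \<beta> \<bullet> e > b + \<alpha> * norm \<beta>} {e \<in> space D. \<beta> \<bullet> e \<ge> b} \<ge> \<gamma>)"

end

theory Submission
  imports Defs
begin

theorem lemma20:
  fixes D D' :: "'a::euclidean_space measure"
    and r \<alpha> \<gamma> \<theta> :: real
  assumes "prob_space D" and "sets D = sets borel"
    and "prob_space D'" and "sets D' = sets borel"
    and "has_margins D r \<alpha> \<gamma>"
    and "tv_dist D D' \<le> \<theta>"
    and "\<theta> \<le> (1/2) * (INF \<beta> \<in> - {0}. measure D {e \<in> space D. \<beta> \<bullet> e > r * norm \<beta> + \<alpha> * norm \<beta>})"
  shows "has_margins D' r \<alpha> (\<gamma> / 4)"
proof -
  interpret P: prob_space D by fact
  interpret P': prob_space D' by fact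
  have spD: "space D = UNIV" using assms(2) sets_eq_imp_space_eq by fastforce
  have spD': "space D' = UNIV" using assms(4) sets_eq_imp_space_eq by fastforce
  have tv: "\<bar>measure D E - measure D' E\<bar> \<le> \<theta>" if "E \<in> sets borel" for E
  proof -
    have "bdd_above ((\<lambda>A. \<bar>measure D A - measure D' A\<bar>) ` sets D)"
    proof (rule bdd_aboveI2)
      fix A show "\<bar>measure D A - measure D' A\<bar> \<le> 1"
        using P.prob_le_1[of A] P'.prob_le_1[of A] measure_nonneg[of D A] measure_nonneg[of D' A]
        by linarith
    qed
    then have "\<bar>measure D E - measure D' E\<bar> \<le> tv_dist D D'"
      unfolding tv_dist_def using that assms(2) by (intro cSUP_upper) auto
    then show ?thesis using assms(6) by linarith
  qed
  have th0: "0 \<le> \<theta>" using tv[of "{}"] by simp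
  define p where "p = (INF \<beta> \<in> - {0}. measure D {e \<in> space D. \<beta> \<bullet> e > r * norm \<beta> + \<alpha> * norm \<beta>})"
  have ple: "p \<le> measure D {e. \<beta> \<bullet> e > r * norm \<beta> + \<alpha> * norm \<beta>}" if "\<beta> \<noteq> 0" for \<beta>
  proof -
    have "bdd_below ((\<lambda>\<beta>. measure D {e \<in> space D. \<beta> \<bullet> e > r * norm \<beta> + \<alpha> * norm \<beta>}) ` (- {0}))"
      by (rule bdd_belowI2[where m=0]) simp
    from cINF_lower[OF this, of \<beta>] show ?thesis unfolding p_def using that spD by simp
  qed
  have thp: "2 * \<theta> \<le> p" using assms(7) unfolding p_def by simp
  show ?thesis
    unfolding has_margins_def
  proof (intro allI impI, elim conjE)
    fix \<beta> :: 'a and b :: real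
    assume bn: "\<beta> \<noteq> 0" and bl: "b \<le> r * norm \<beta>" and pos: "measure D' {e \<in> space D'. b \<le> \<beta> \<bullet> e} > 0"
    define B where "B = {e. b \<le> \<beta> \<bullet> e}"
    define A where "A = {e. b + \<alpha> * norm \<beta> < \<beta> \<bullet> e}"
    define C where "C = {e. r * norm \<beta> + \<alpha> * norm \<beta> < \<beta> \<bullet> e}"
    have Bm: "B \<in> sets borel" unfolding B_def by measurable
    have Am: "A \<in> sets borel" unfolding A_def by measurable
    have Cm: "C \<in> sets borel" unfolding C_def by measurable
    have ABm: "A \<inter> B \<in> sets borel" using Am Bm by auto
    have pos': "measure D' B > 0" using pos spD' unfolding B_def by simp
    have pC: "p \<le> measure D C" using ple[OF bn] unfolding C_def .
    have goal: "\<gamma> / 4 \<le> measure D' (A \<inter> B) / measure D' B"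
    proof (cases "\<alpha> \<ge> 0")
      case True
      have nb: "0 \<le> norm \<beta>" by simp
      have CAB: "C \<subseteq> A \<inter> B" unfolding A_def B_def C_def
      proof
        fix e assume "e \<in> {e. r * norm \<beta> + \<alpha> * norm \<beta> < \<beta> \<bullet> e}"
        moreover have "0 \<le> \<alpha> * norm \<beta>" using True by simp
        ultimately show "e \<in> {e. b + \<alpha> * norm \<beta> < \<beta> \<bullet> e} \<inter> {e. b \<le> \<beta> \<bullet> e}"
          using bl by auto
      qed
      have "measure D C \<le> measure D (A \<inter> B)"
        using CAB ABm assms(2) by (intro P.finite_measure_mono) auto
      also have "measure D (A \<inter> B) \<le> measure D B"
        using Bm assms(2) by (intro P.finite_measure_mono) auto
      finally have DCB: "measure D C \<le> measure D B" .
      have DCAB: "measure D C \<le> measure D (A \<inter> B)"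
        using CAB ABm assms(2) by (intro P.finite_measure_mono) auto
      have t1: "\<bar>measure D B - measure D' B\<bar> \<le> \<theta>" using tv[OF Bm] .
      have t2: "\<bar>measure D (A \<inter> B) - measure D' (A \<inter> B)\<bar> \<le> \<theta>" using tv[OF ABm] .
      have DBpos: "measure D B > 0" using t1 pos' thp pC DCB th0 by linarith
      have mar: "\<gamma> \<le> measure D (A \<inter> B) / measure D B"
        using assms(5) bn bl DBpos spD unfolding has_margins_def cond_prob_def A_def B_def by auto
      show ?thesis
      proof (cases "\<gamma> \<ge> 0")
        case False
        have "0 \<le> measure D' (A \<inter> B) / measure D' B" by simp
        then show ?thesis using False by linarith
      next
        case True
        have h1: "measure D' B \<le> 2 * measure D B" using t1 thp pC DCB th0 by linarith
        have h2: "measure D (A \<inter> B) \<le> 2 * measure D' (A \<inter> B)" using t2 thp pC DCAB by linarith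
        have h3: "\<gamma> * measure D B \<le> measure D (A \<inter> B)" using mar DBpos by (simp add: field_simps)
        have "\<gamma> * measure D' B \<le> \<gamma> * (2 * measure D B)" using mult_left_mono[OF h1 True] .
        then have "\<gamma> * measure D' B \<le> 4 * measure D' (A \<inter> B)" using h2 h3 by linarith
        then show ?thesis using pos' by (simp add: field_simps)
      qed
    next
      case False
      have an: "\<alpha> * norm \<beta> < 0" using False bn by (simp add: mult_neg_pos)
      have "A \<inter> B = B" unfolding A_def B_def using an by auto
      then have one: "measure D' (A \<inter> B) / measure D' B = 1" using pos' by simp
      have "\<gamma> \<le> 1"
      proof (cases "measure D B > 0")
        case True
        have "\<gamma> \<le> measure D (A \<inter> B) / measure D B"
          using assms(5) bn bl True spD unfolding has_margins_def cond_prob_def A_def B_def by auto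
        also have "\<dots> \<le> 1" using \<open>A \<inter> B = B\<close> by simp
        finally show ?thesis .
      next
        case F2: False
        have "measure D' B \<le> \<theta>" using tv[OF Bm] F2 measure_nonneg[of D B] by linarith
        then have Cpos: "measure D C > 0" using pos' thp pC by linarith
        define b' where "b' = (r + \<alpha>) * norm \<beta>"
        define B' where "B' = {e. b' \<le> \<beta> \<bullet> e}"
        have B'm: "B' \<in> sets borel" unfolding B'_def by measurable
        have b'l: "b' \<le> r * norm \<beta>" using False unfolding b'_def
          by (simp add: distrib_right mult_nonpos_nonneg)
        have "C \<subseteq> B'" unfolding C_def B'_def b'_def by (auto simp: distrib_right)
        then have "measure D C \<le> measure D B'"
          using B'm assms(2) by (intro P.finite_measure_mono) auto
        then have B'pos: "measure D B' > 0" using Cpos by linarith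
        have "\<gamma> \<le> cond_prob D {e \<in> space D. \<beta> \<bullet> e > b' + \<alpha> * norm \<beta>} {e \<in> space D. \<beta> \<bullet> e \<ge> b'}"
          using assms(5) bn b'l B'pos spD unfolding has_margins_def B'_def by auto
        also have "\<dots> \<le> 1" unfolding cond_prob_def
        proof (rule divide_le_eq_1_pos[THEN iffD2])
          show "0 < measure D {e \<in> space D. b' \<le> \<beta> \<bullet> e}" using B'pos spD unfolding B'_def by simp
          show "measure D ({e \<in> space D. b' + \<alpha> * norm \<beta> < \<beta> \<bullet> e} \<inter> {e \<in> space D. b' \<le> \<beta> \<bullet> e})
              \<le> measure D {e \<in> space D. b' \<le> \<beta> \<bullet> e}"
            using B'm assms(2) spD unfolding B'_def by (intro P.finite_measure_mono) auto
        qed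
        finally show ?thesis .
      qed
      then show ?thesis using one by simp
    qed
    then show "\<gamma> / 4 \<le> cond_prob D' {e \<in> space D'. b + \<alpha> * norm \<beta> < \<beta> \<bullet> e} {e \<in> space D'. b \<le> \<beta> \<bullet> e}"
      unfolding cond_prob_def A_def B_def spD' by simp
  qed
qed

end
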